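(* Let $(X,\mathscr{A},\mu)$ be a $\sigma$-finite measure space and $\phi$ a nonsingular transformation of $X$ such that $\mathsf{h}_\phi<\infty$ a.e. $[\mu]$. Then the following are equivalent: (i) $\mathsf{E}(\mathsf{h}_{\phi^n})=\mathsf{h}_{\phi^n}$ a.e. $[\mu]$ for all $n\in\mathbb{N}$; (ii) $\mathsf{h}_{\phi^{n+1}}\circ\phi=\mathsf{h}_\phi\circ\phi\cdot\mathsf{h}_{\phi^n}$ a.e. $[\mu]$ for all $n\in\mathbb{N}$. Moreover, if (i) holds, then: (iii) $\mathsf{h}_{\phi^{m+n}}\circ\phi^n=\mathsf{h}_\phi\circ\phi\cdots\mathsf{h}_\phi\circ\phi^n\cdot\mathsf{h}_{\phi^m}$ a.e. $[\mu]$ for all $m\in\mathbb{Z}_+$, $n\in\mathbb{N}$; (iv) $\mathsf{h}_{\phi^{m+n}}\circ\phi^n=\mathsf{h}_{\phi^n}\circ\phi^n\cdot\mathsf{h}_{\phi^m}$ a.e. $[\mu]$ for all $m\in\mathbb{Z}_+$, $n\in\mathbb{N}$; (v) $\mathsf{h}_{\phi^n}\circ\phi^n=\mathsf{h}_\phi\circ\phi\cdots\mathsf{h}_\phi\circ\phi^n$ a.e. $[\mu]$ for all $n\in\mathbb{N}$; (vi) $\mathsf{h}_{\phi^{n+1}}\circ\phi^n=\mathsf{h}_\phi\circ\phi^0\cdots\mathsf{h}_\phi\circ\phi^n$ a.e. $[\mu]$ for all $n\in\mathbb{Z}_+$.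
   Context: $\mathbb{N}=\{1,2,\dots\}$, $\mathbb{Z}_+=\{0,1,\dots\}$. Conventions: $0\cdot\infty=0$, $1/0=\infty$, $0/0=1$. Nonsingular: $\phi^{-1}(\Delta)\in\mathscr{A}$ for $\Delta\in\mathscr{A}$ and $\mu(\phi^{-1}(\Delta))=0$ when $\mu(\Delta)=0$. $\phi^n$ is the $n$-fold composition ($\phi^0=\mathrm{id}_X$), $\mathsf{h}_{\phi^n}$ the Radon–Nikodym derivative of $\mu\circ(\phi^n)^{-1}$ w.r.t. $\mu$. $\mathsf{E}(f)$ is the conditional expectation of an $\mathscr{A}$-measurable $f\colon X\to[0,\infty]$ w.r.t. $\phi^{-1}(\mathscr{A})$: the a.e. unique $\phi^{-1}(\mathscr{A})$-measurable function with $\int(g\circ\phi)f\,\mathrm{d}\mu=\int(g\circ\phi)\mathsf{E}(f)\,\mathrm{d}\mu$ for all $\mathscr{A}$-measurable $g\ge0$. *)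

theory Defs
  imports "HOL-Analysis.Analysis"
begin

definition nonsingular :: "'a measure \<Rightarrow> ('a \<Rightarrow> 'a) \<Rightarrow> bool" where
  "nonsingular M \<phi> \<longleftrightarrow> \<phi> \<in> M \<rightarrow>\<^sub>M M \<and>
     (\<forall>A\<in>sets M. emeasure M A = 0 \<longrightarrow> emeasure M (\<phi> -` A \<inter> space M) = 0)"

definition hphi :: "'a measure \<Rightarrow> ('a \<Rightarrow> 'a) \<Rightarrow> nat \<Rightarrow> 'a \<Rightarrow> ennreal" where
  "hphi M \<phi> n = RN_deriv M (distr M M (\<phi> ^^ n))"

definition is_cond_exp :: "'a measure \<Rightarrow> ('a \<Rightarrow> 'a) \<Rightarrow> ('a \<Rightarrow> ennreal) \<Rightarrow> ('a \<Rightarrow> ennreal) \<Rightarrow> bool" where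
  "is_cond_exp M \<phi> f g \<longleftrightarrow> g \<in> borel_measurable (vimage_algebra (space M) \<phi> M) \<and>
     (\<forall>u\<in>borel_measurable M. (\<integral>\<^sup>+ x. u (\<phi> x) * f x \<partial>M) = (\<integral>\<^sup>+ x. u (\<phi> x) * g x \<partial>M))"

end

theory Submission
  imports Defs
begin

lemma ns_meas: "nonsingular M \<phi> \<Longrightarrow> \<phi> \<in> M \<rightarrow>\<^sub>M M"
  by (simp add: nonsingular_def)

lemma funpow_meas: "\<phi> \<in> M \<rightarrow>\<^sub>M M \<Longrightarrow> (\<phi> ^^ n) \<in> M \<rightarrow>\<^sub>M M"
  by (induction n) (auto simp: funpow_Suc_right intro: measurable_comp)

lemma h_meas[measurable]: "hphi M \<phi> n \<in> borel_measurable M"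
  unfolding hphi_def by simp

lemma AE_comp1:
  assumes "nonsingular M \<phi>" "AE x in M. P x"
  shows "AE x in M. P (\<phi> x)"
proof -
  from assms(2) obtain N where N: "{x\<in>space M. \<not> P x} \<subseteq> N" "emeasure M N = 0" "N \<in> sets M"
    by (auto elim: AE_E)
  have m: "\<phi> \<in> M \<rightarrow>\<^sub>M M" using assms(1) by (simp add: nonsingular_def)
  have "emeasure M (\<phi> -` N \<inter> space M) = 0" using assms(1) N by (simp add: nonsingular_def)
  moreover have "\<phi> -` N \<inter> space M \<in> sets M" using m N(3) by (rule measurable_sets)
  moreover have "{x\<in>space M. \<not> P (\<phi> x)} \<subseteq> \<phi> -` N \<inter> space M"
    using N(1) measurable_space[OF m] by auto
  ultimately show ?thesis by (intro AE_I) auto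
qed

lemma AE_comp:
  assumes "nonsingular M \<phi>" "AE x in M. P x"
  shows "AE x in M. P ((\<phi>^^n) x)"
proof (induction n)
  case 0 then show ?case using assms(2) by simp
next
  case (Suc n)
  have "AE x in M. P ((\<phi>^^n) (\<phi> x))"
    by (rule AE_comp1[of M \<phi> "\<lambda>y. P ((\<phi>^^n) y)", OF assms(1) Suc.IH])
  thus ?case by (simp add: funpow_swap1)
qed

lemma ac_n:
  assumes ns: "nonsingular M \<phi>"
  shows "absolutely_continuous M (distr M M (\<phi>^^n))"
  unfolding absolutely_continuous_def
proof
  fix A assume A: "A \<in> null_sets M"
  have m: "(\<phi>^^n) \<in> M \<rightarrow>\<^sub>M M" by (rule funpow_meas[OF ns_meas[OF ns]])
  have "AE x in M. x \<notin> A" using A by (rule AE_not_in)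
  hence "AE x in M. (\<phi>^^n) x \<notin> A" by (rule AE_comp[OF ns])
  hence "AE x in M. x \<notin> (\<phi>^^n) -` A \<inter> space M" by auto
  hence "(\<phi>^^n) -` A \<inter> space M \<in> null_sets M"
    using measurable_sets[OF m null_setsD2[OF A]] AE_iff_null_sets by blast
  thus "A \<in> null_sets (distr M M (\<phi>^^n))"
    using null_sets_distr_iff[OF m] A by auto
qed

lemma dens_h:
  assumes sf: "sigma_finite_measure M" and ns: "nonsingular M \<phi>"
  shows "density M (hphi M \<phi> n) = distr M M (\<phi>^^n)"
  unfolding hphi_def
  by (rule sigma_finite_measure.density_RN_deriv[OF sf ac_n[OF ns]]) simp

lemma cov:
  assumes sf: "sigma_finite_measure M" and ns: "nonsingular M \<phi>"
    and v: "v \<in> borel_measurable M"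
  shows "(\<integral>\<^sup>+x. v ((\<phi>^^n) x) \<partial>M) = (\<integral>\<^sup>+x. hphi M \<phi> n x * v x \<partial>M)"
proof -
  have m: "(\<phi>^^n) \<in> M \<rightarrow>\<^sub>M M" by (rule funpow_meas[OF ns_meas[OF ns]])
  have "(\<integral>\<^sup>+x. v ((\<phi>^^n) x) \<partial>M) = integral\<^sup>N (distr M M (\<phi>^^n)) v"
    by (rule nn_integral_distr[symmetric]) (use m v in auto)
  also have "\<dots> = integral\<^sup>N (density M (hphi M \<phi> n)) v" by (simp add: dens_h[OF sf ns])
  also have "\<dots> = (\<integral>\<^sup>+x. hphi M \<phi> n x * v x \<partial>M)"
    by (rule nn_integral_density) (use v in auto)
  finally show ?thesis .
qed

lemma cov2:
  assumes sf: "sigma_finite_measure M" and ns: "nonsingular M \<phi>"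
    and v: "v \<in> borel_measurable M"
  shows "(\<integral>\<^sup>+x. hphi M \<phi> n x * v ((\<phi>^^m) x) \<partial>M) = (\<integral>\<^sup>+x. hphi M \<phi> (m+n) x * v x \<partial>M)"
proof -
  have m: "(\<phi>^^m) \<in> M \<rightarrow>\<^sub>M M" by (rule funpow_meas[OF ns_meas[OF ns]])
  have vm: "(\<lambda>x. v ((\<phi>^^m) x)) \<in> borel_measurable M" using measurable_comp[OF m v] by (simp add: comp_def)
  have "(\<integral>\<^sup>+x. hphi M \<phi> n x * v ((\<phi>^^m) x) \<partial>M) = (\<integral>\<^sup>+x. v ((\<phi>^^m) ((\<phi>^^n) x)) \<partial>M)"
    using cov[OF sf ns vm, of n] by simp
  also have "\<dots> = (\<integral>\<^sup>+x. v ((\<phi>^^(m+n)) x) \<partial>M)" by (simp add: funpow_add)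
  also have "\<dots> = (\<integral>\<^sup>+x. hphi M \<phi> (m+n) x * v x \<partial>M)" by (rule cov[OF sf ns v])
  finally show ?thesis .
qed


lemma simple_factor:
  fixes s :: "'a \<Rightarrow> ennreal"
  assumes phi: "\<phi> \<in> space M \<rightarrow> space M"
    and s: "simple_function (vimage_algebra (space M) \<phi> M) s"
  shows "\<exists>k\<in>borel_measurable M. \<forall>x\<in>space M. s x = k (\<phi> x)"
proof -
  let ?N = "vimage_algebra (space M) \<phi> M"
  let ?S = "s ` space M"
  have fin: "finite ?S" using simple_functionD(1)[OF s] by simp
  have "\<forall>c\<in>?S. \<exists>A. A \<in> sets M \<and> s -` {c} \<inter> space M = \<phi> -` A \<inter> space M"
  proof
    fix c assume "c \<in> ?S"
    have "s -` {c} \<inter> space ?N \<in> sets ?N" by (rule simple_functionD(2)[OF s])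
    thus "\<exists>A. A \<in> sets M \<and> s -` {c} \<inter> space M = \<phi> -` A \<inter> space M"
      using sets_vimage_algebra2[OF phi] by auto
  qed
  from bchoice[OF this] obtain A where A0: "\<forall>c\<in>?S. A c \<in> sets M \<and> s -` {c} \<inter> space M = \<phi> -` A c \<inter> space M"
    by blast
  hence A: "\<And>c. c \<in> ?S \<Longrightarrow> A c \<in> sets M \<and> s -` {c} \<inter> space M = \<phi> -` A c \<inter> space M"
    by blast
  define A' where "A' c = (if c \<in> ?S then A c else {})" for c
  have A'm: "A' c \<in> sets M" for c using A by (auto simp: A'_def)
  define k where "k y = (\<Sum>c\<in>?S. c * indicator (A' c) y)" for y
  have km: "k \<in> borel_measurable M"
    unfolding k_def using A'm by (intro borel_measurable_sum) auto
  have "s x = k (\<phi> x)" if x: "x \<in> space M" for x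
  proof -
    have "k (\<phi> x) = (\<Sum>c\<in>?S. if c = s x then c else 0)"
      unfolding k_def
    proof (rule sum.cong[OF refl])
      fix c assume c: "c \<in> ?S"
      have "(\<phi> x \<in> A' c) = (s x = c)" using A[OF c] x by (auto simp: A'_def c)
      thus "c * indicator (A' c) (\<phi> x) = (if c = s x then c else 0)" by (auto simp: indicator_def)
    qed
    also have "\<dots> = s x" using fin x by (simp add: sum.delta')
    finally show ?thesis by simp
  qed
  with km show ?thesis by blast
qed

lemma factor:
  fixes g :: "'a \<Rightarrow> ennreal"
  assumes phi: "\<phi> \<in> space M \<rightarrow> space M"
    and g: "g \<in> borel_measurable (vimage_algebra (space M) \<phi> M)"
  shows "\<exists>k\<in>borel_measurable M. \<forall>x\<in>space M. g x = k (\<phi> x)"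
proof -
  obtain f where f: "\<And>i. simple_function (vimage_algebra (space M) \<phi> M) (f i)"
    "incseq f" "\<And>i x. f i x < top" "\<And>x. (SUP i. f i x) = g x"
    by (rule borel_measurable_implies_simple_function_sequence'[OF g]) (rule that; assumption)
  have "\<forall>i. \<exists>k. k \<in> borel_measurable M \<and> (\<forall>x\<in>space M. f i x = k (\<phi> x))"
  proof
    fix i show "\<exists>k. k \<in> borel_measurable M \<and> (\<forall>x\<in>space M. f i x = k (\<phi> x))"
      using simple_factor[OF phi f(1)[of i]] by blast
  qed
  from choice[OF this] obtain K where K0: "\<forall>i. K i \<in> borel_measurable M \<and> (\<forall>x\<in>space M. f i x = K i (\<phi> x))"
    by blast
  hence K: "\<And>i. K i \<in> borel_measurable M" "\<And>i x. x \<in> space M \<Longrightarrow> f i x = K i (\<phi> x)"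
    by blast+
  define k where "k y = (SUP i. K i y)" for y
  have "k \<in> borel_measurable M" unfolding k_def by (rule borel_measurable_SUP) (auto intro: K(1))
  moreover have "\<forall>x\<in>space M. g x = k (\<phi> x)"
  proof
    fix x assume x: "x \<in> space M"
    have "g x = (SUP i. f i x)" using f(4) by simp
    also have "\<dots> = (SUP i. K i (\<phi> x))" using K(2)[OF x] by simp
    finally show "g x = k (\<phi> x)" by (simp add: k_def)
  qed
  ultimately show ?thesis by blast
qed


lemma h0:
  assumes sf: "sigma_finite_measure M" and ns: "nonsingular M \<phi>"
  shows "AE x in M. hphi M \<phi> 0 x = 1"
proof -
  have "density M (\<lambda>_. 1) = distr M M (\<phi>^^0)" by (simp add: density_1 id_def)
  hence "AE x in M. (1::ennreal) = RN_deriv M (distr M M (\<phi>^^0)) x"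
    by (intro sigma_finite_measure.RN_deriv_unique[OF sf]) auto
  thus ?thesis by (auto simp: hphi_def)
qed

lemma i_ii:
  assumes sf: "sigma_finite_measure M" and ns: "nonsingular M \<phi>"
    and g: "g \<in> borel_measurable (vimage_algebra (space M) \<phi> M)"
    and ae: "AE x in M. g x = hphi M \<phi> n x"
  shows "AE x in M. hphi M \<phi> (n+1) (\<phi> x) = hphi M \<phi> 1 (\<phi> x) * hphi M \<phi> n x"
proof -
  have m: "\<phi> \<in> M \<rightarrow>\<^sub>M M" by (rule ns_meas[OF ns])
  have phi: "\<phi> \<in> space M \<rightarrow> space M" using measurable_space[OF m] by auto
  obtain k where k: "k \<in> borel_measurable M" "\<And>x. x \<in> space M \<Longrightarrow> g x = k (\<phi> x)"
    using factor[OF phi g] by blast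
  have "density M (\<lambda>x. hphi M \<phi> 1 x * k x) = distr M M (\<phi>^^(n+1))"
  proof (rule measure_eqI)
    show "sets (density M (\<lambda>x. hphi M \<phi> 1 x * k x)) = sets (distr M M (\<phi>^^(n+1)))" by simp
  next
    fix A assume "A \<in> sets (density M (\<lambda>x. hphi M \<phi> 1 x * k x))"
    hence A: "A \<in> sets M" by simp
    have km: "(\<lambda>x. k x * indicator A x) \<in> borel_measurable M" using k(1) A by measurable
    have "emeasure (density M (\<lambda>x. hphi M \<phi> 1 x * k x)) A
        = (\<integral>\<^sup>+x. hphi M \<phi> 1 x * k x * indicator A x \<partial>M)"
      using A k(1) by (simp add: emeasure_density)
    also have "\<dots> = (\<integral>\<^sup>+x. hphi M \<phi> 1 x * (k x * indicator A x) \<partial>M)"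
      by (simp add: mult.assoc)
    also have "\<dots> = (\<integral>\<^sup>+x. k ((\<phi>^^1) x) * indicator A ((\<phi>^^1) x) \<partial>M)"
      using cov[OF sf ns km, of 1] by simp
    also have "\<dots> = (\<integral>\<^sup>+x. g x * indicator A (\<phi> x) \<partial>M)"
      using k(2) by (intro nn_integral_cong) simp
    also have "\<dots> = (\<integral>\<^sup>+x. hphi M \<phi> n x * indicator A ((\<phi>^^1) x) \<partial>M)"
      using ae by (intro nn_integral_cong_AE) auto
    also have "\<dots> = (\<integral>\<^sup>+x. hphi M \<phi> (1+n) x * indicator A x \<partial>M)"
      using A by (intro cov2[OF sf ns]) simp
    also have "\<dots> = emeasure (density M (hphi M \<phi> (n+1))) A"
      using A by (simp add: emeasure_density add.commute)
    also have "\<dots> = emeasure (distr M M (\<phi>^^(n+1))) A" by (simp add: dens_h[OF sf ns])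
    finally show "emeasure (density M (\<lambda>x. hphi M \<phi> 1 x * k x)) A = emeasure (distr M M (\<phi>^^(n+1))) A" .
  qed
  hence "AE x in M. hphi M \<phi> 1 x * k x = hphi M \<phi> (n+1) x"
    unfolding hphi_def using k(1)
    by (intro sigma_finite_measure.RN_deriv_unique[OF sf]) (auto simp: hphi_def[symmetric])
  hence "AE x in M. hphi M \<phi> 1 (\<phi> x) * k (\<phi> x) = hphi M \<phi> (n+1) (\<phi> x)"
    by (rule AE_comp1[OF ns])
  with ae AE_space show ?thesis
  proof eventually_elim
    case (elim x)
    thus ?case using k(2)[of x] by simp
  qed
qed

lemma ii_i:
  assumes sf: "sigma_finite_measure M" and ns: "nonsingular M \<phi>"
    and fin: "AE x in M. hphi M \<phi> 1 x < \<infinity>"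
    and ii: "AE x in M. hphi M \<phi> (n+1) (\<phi> x) = hphi M \<phi> 1 (\<phi> x) * hphi M \<phi> n x"
  shows "\<exists>g. is_cond_exp M \<phi> (hphi M \<phi> n) g \<and> (AE x in M. g x = hphi M \<phi> n x)"
proof -
  have m: "\<phi> \<in> M \<rightarrow>\<^sub>M M" by (rule ns_meas[OF ns])
  have phi: "\<phi> \<in> space M \<rightarrow> space M" using measurable_space[OF m] by auto
  define g where "g x = hphi M \<phi> (n+1) (\<phi> x) / hphi M \<phi> 1 (\<phi> x)" for x
  have d0: "AE x in density M (hphi M \<phi> 1). hphi M \<phi> 1 x \<noteq> 0"
    by (subst AE_density) auto
  have eq: "density M (hphi M \<phi> 1) = distr M M \<phi>"
    using dens_h[OF sf ns, of 1] by simp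
  have "AE x in distr M M \<phi>. hphi M \<phi> 1 x \<noteq> 0"
    using d0 unfolding eq .
  hence pos: "AE x in M. hphi M \<phi> 1 (\<phi> x) \<noteq> 0"
    by (subst (asm) AE_distr_iff) (use m in auto)
  have fin': "AE x in M. hphi M \<phi> 1 (\<phi> x) < \<infinity>" by (rule AE_comp1[OF ns fin])
  have ae: "AE x in M. g x = hphi M \<phi> n x"
    using ii pos fin'
  proof eventually_elim
    case (elim x)
    have t: "hphi M \<phi> 1 (\<phi> x) \<noteq> top" using elim(3) by simp
    show ?case using elim(1,2) t unfolding g_def by (metis ennreal_mult_divide_eq mult.commute)
  qed
  have "(\<lambda>y. hphi M \<phi> (n+1) y / hphi M \<phi> 1 y) \<circ> \<phi> \<in> borel_measurable (vimage_algebra (space M) \<phi> M)"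
    by (rule measurable_comp[OF measurable_vimage_algebra1[OF phi]]) simp
  hence meas: "g \<in> borel_measurable (vimage_algebra (space M) \<phi> M)"
    by (simp add: g_def[abs_def] comp_def)
  have "is_cond_exp M \<phi> (hphi M \<phi> n) g"
    unfolding is_cond_exp_def using meas ae
    by (auto intro!: nn_integral_cong_AE)
  with ae show ?thesis by blast
qed

theorem proposition26:
  fixes M :: "'a measure" and \<phi> :: "'a \<Rightarrow> 'a"
  assumes "sigma_finite_measure M"
    and "nonsingular M \<phi>"
    and "AE x in M. hphi M \<phi> 1 x < \<infinity>"
  shows "((\<forall>n\<ge>1. \<exists>g. is_cond_exp M \<phi> (hphi M \<phi> n) g \<and> (AE x in M. g x = hphi M \<phi> n x))
          \<longleftrightarrow> (\<forall>n\<ge>1. AE x in M. hphi M \<phi> (n + 1) (\<phi> x) = hphi M \<phi> 1 (\<phi> x) * hphi M \<phi> n x))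
    \<and> ((\<forall>n\<ge>1. \<exists>g. is_cond_exp M \<phi> (hphi M \<phi> n) g \<and> (AE x in M. g x = hphi M \<phi> n x)) \<longrightarrow>
        (\<forall>m n. n \<ge> 1 \<longrightarrow> (AE x in M. hphi M \<phi> (m + n) ((\<phi> ^^ n) x)
            = (\<Prod>i\<in>{1..n}. hphi M \<phi> 1 ((\<phi> ^^ i) x)) * hphi M \<phi> m x))
      \<and> (\<forall>m n. n \<ge> 1 \<longrightarrow> (AE x in M. hphi M \<phi> (m + n) ((\<phi> ^^ n) x)
            = hphi M \<phi> n ((\<phi> ^^ n) x) * hphi M \<phi> m x))
      \<and> (\<forall>n\<ge>1. AE x in M. hphi M \<phi> n ((\<phi> ^^ n) x) = (\<Prod>i\<in>{1..n}. hphi M \<phi> 1 ((\<phi> ^^ i) x)))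
      \<and> (\<forall>n. AE x in M. hphi M \<phi> (n + 1) ((\<phi> ^^ n) x) = (\<Prod>i\<in>{0..n}. hphi M \<phi> 1 ((\<phi> ^^ i) x))))"
proof -
  note sf = assms(1) and ns = assms(2) and fin = assms(3)
  let ?I = "\<forall>n\<ge>1. \<exists>g. is_cond_exp M \<phi> (hphi M \<phi> n) g \<and> (AE x in M. g x = hphi M \<phi> n x)"
  let ?II = "\<forall>n\<ge>1. AE x in M. hphi M \<phi> (n + 1) (\<phi> x) = hphi M \<phi> 1 (\<phi> x) * hphi M \<phi> n x"
  have fwd: ?II if I: ?I
  proof (intro allI impI)
    fix n :: nat assume "n \<ge> 1"
    then obtain g where g: "is_cond_exp M \<phi> (hphi M \<phi> n) g" "AE x in M. g x = hphi M \<phi> n x"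
      using I by blast
    show "AE x in M. hphi M \<phi> (n + 1) (\<phi> x) = hphi M \<phi> 1 (\<phi> x) * hphi M \<phi> n x"
      by (rule i_ii[OF sf ns _ g(2)]) (use g(1) in \<open>simp add: is_cond_exp_def\<close>)
  qed
  have bwd: ?I if II: ?II
    using ii_i[OF sf ns fin] II by blast
  have all: "AE x in M. hphi M \<phi> (n + 1) (\<phi> x) = hphi M \<phi> 1 (\<phi> x) * hphi M \<phi> n x"
    if II: ?II for n
  proof (cases "n = 0")
    case True
    show ?thesis using h0[OF sf ns] by eventually_elim (simp add: True)
  next
    case False thus ?thesis using II by simp
  qed
  have iii: "AE x in M. hphi M \<phi> (m + n) ((\<phi> ^^ n) x)
            = (\<Prod>i\<in>{1..n}. hphi M \<phi> 1 ((\<phi> ^^ i) x)) * hphi M \<phi> m x"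
    if II: ?II for m n
  proof (induction n)
    case 0 show ?case by simp
  next
    case (Suc n)
    have "AE x in M. hphi M \<phi> (m + n + 1) (\<phi> ((\<phi>^^n) x)) = hphi M \<phi> 1 (\<phi> ((\<phi>^^n) x)) * hphi M \<phi> (m+n) ((\<phi>^^n) x)"
      by (rule AE_comp[OF ns all[OF II]])
    with Suc.IH show ?case
    proof eventually_elim
      case (elim x)
      have p: "(\<Prod>i\<in>{1..Suc n}. hphi M \<phi> 1 ((\<phi> ^^ i) x)) = hphi M \<phi> 1 ((\<phi> ^^ Suc n) x) * (\<Prod>i\<in>{1..n}. hphi M \<phi> 1 ((\<phi> ^^ i) x))"
        by (simp add: prod.nat_ivl_Suc' mult.commute del: funpow.simps)
      show ?case using elim unfolding p by (simp add: mult.assoc)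
    qed
  qed
  have v: "AE x in M. hphi M \<phi> n ((\<phi> ^^ n) x) = (\<Prod>i\<in>{1..n}. hphi M \<phi> 1 ((\<phi> ^^ i) x))"
    if II: ?II for n
    using iii[OF II, of 0 n] h0[OF sf ns] by eventually_elim simp
  show ?thesis
  proof (intro conjI impI allI)
    show "?I \<longleftrightarrow> ?II" using fwd bwd by blast
  next
    fix m n :: nat assume I: ?I and "n \<ge> 1"
    show "AE x in M. hphi M \<phi> (m + n) ((\<phi> ^^ n) x)
            = (\<Prod>i\<in>{1..n}. hphi M \<phi> 1 ((\<phi> ^^ i) x)) * hphi M \<phi> m x"
      by (rule iii[OF fwd[OF I]])
  next
    fix m n :: nat assume I: ?I and "n \<ge> 1"
    show "AE x in M. hphi M \<phi> (m + n) ((\<phi> ^^ n) x)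
            = hphi M \<phi> n ((\<phi> ^^ n) x) * hphi M \<phi> m x"
      using iii[OF fwd[OF I], of m n] v[OF fwd[OF I], of n] by eventually_elim simp
  next
    fix n :: nat assume I: ?I and "n \<ge> 1"
    show "AE x in M. hphi M \<phi> n ((\<phi> ^^ n) x) = (\<Prod>i\<in>{1..n}. hphi M \<phi> 1 ((\<phi> ^^ i) x))"
      by (rule v[OF fwd[OF I]])
  next
    fix n :: nat assume I: ?I
    show "AE x in M. hphi M \<phi> (n + 1) ((\<phi> ^^ n) x) = (\<Prod>i\<in>{0..n}. hphi M \<phi> 1 ((\<phi> ^^ i) x))"
      using iii[OF fwd[OF I], of 1 n]
    proof eventually_elim
      case (elim x)
      have p: "(\<Prod>i\<in>{0..n}. hphi M \<phi> 1 ((\<phi> ^^ i) x)) = hphi M \<phi> 1 ((\<phi> ^^ 0) x) * (\<Prod>i\<in>{Suc 0..n}. hphi M \<phi> 1 ((\<phi> ^^ i) x))"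
        by (rule prod.atLeast_Suc_atMost) simp
      show ?case using elim unfolding p by (simp add: mult.commute add.commute)
    qed
  qed
qed

end
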